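(* Let $D$ be a tournament missing disjoint paths of length 2 and let $C=a_1b_1c_1,\dots,a_kb_kc_k$ be a double cycle in $\Delta(D)$. Then for all $i\in\{1,\dots,k\}$, with $H=D[K(C)]$: (1) $N^+_H(a_i)\setminus\{c_i\}=N^+_H(c_i)\setminus\{a_i\}$; (2) $N^-_H(a_i)\setminus\{c_i\}=N^-_H(c_i)\setminus\{a_i\}$.
   Context: All digraphs are finite oriented graphs; $D[X]$ is the induced subdigraph. $N^+_H(v)$, $N^-_H(v)$ are out/in-neighborhoods in $H$; $N^{++}(v)$ (in $D$) is the set of vertices $w\notin N^+(v)\cup\{v\}$ with $u\to w$ for some $u\in N^+(v)$. A missing edge is a pair of distinct non-adjacent vertices; the missing graph is formed by the missing edges. $D$ is a tournament missing disjoint paths of length 2 if its missing graph is a vertex-disjoint union of paths each with exactly two edges. For missing edges $\{x,y\},\{a,b\}$, $\{x,y\}$ loses to $\{a,b\}$ (written $xy\to ab$) if the endpoints can be labelled so that $x\to a$, $b\notin N^+(x)\cup N^{++}(x)$, $y\to b$, $a\notin N^+(y)\cup N^{++}(y)$. $\Delta(D)$ has the missing edges as vertices and arcs $(e,e')$ whenever $e$ loses to $e'$. For missing paths $abc$, $xyz$, $abc\to xyz$ means each of $ab,bc$ loses to each of $xy,yz$. A double cycle is a sequence $C=a_1b_1c_1,\dots,a_kb_kc_k$ ($k\ge2$) of distinct missing paths of length 2 (components of the missing graph, edges $a_ib_i,b_ic_i$) with $a_ib_ic_i\to a_{i+1}b_{i+1}c_{i+1}$ for all $i$, indices modulo $k$.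 $K(C)=\{a_i,b_i,c_i:1\le i\le k\}$. *)

theory Defs
  imports Main
begin

definition oriented_graph :: "'a set \<Rightarrow> ('a \<times> 'a) set \<Rightarrow> bool" where
  "oriented_graph V E \<longleftrightarrow> finite V \<and> E \<subseteq> V \<times> V \<and> (\<forall>x. (x,x) \<notin> E)
     \<and> (\<forall>x y. (x,y) \<in> E \<longrightarrow> (y,x) \<notin> E)"

definition missing_edge :: "'a set \<Rightarrow> ('a \<times> 'a) set \<Rightarrow> 'a \<Rightarrow> 'a \<Rightarrow> bool" where
  "missing_edge V E x y \<longleftrightarrow> x \<in> V \<and> y \<in> V \<and> x \<noteq> y \<and> (x,y) \<notin> E \<and> (y,x) \<notin> E"

text \<open>The missing graph is a vertex-disjoint union of paths with exactly two edges
  (each triple (a,b,c) encodes the path with edges ab, bc).\<close>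
definition tournament_missing_disjoint_P2 :: "'a set \<Rightarrow> ('a \<times> 'a) set \<Rightarrow> bool" where
  "tournament_missing_disjoint_P2 V E \<longleftrightarrow> oriented_graph V E \<and>
     (\<exists>P :: ('a \<times> 'a \<times> 'a) set.
        (\<forall>(a,b,c)\<in>P. a \<in> V \<and> b \<in> V \<and> c \<in> V \<and> a \<noteq> b \<and> b \<noteq> c \<and> a \<noteq> c) \<and>
        (\<forall>(a,b,c)\<in>P. \<forall>(x,y,z)\<in>P. (a,b,c) \<noteq> (x,y,z) \<longrightarrow> {a,b,c} \<inter> {x,y,z} = {}) \<and>
        (\<forall>x y. missing_edge V E x y \<longleftrightarrow>
           (\<exists>(a,b,c)\<in>P. {x,y} = {a,b} \<or> {x,y} = {b,c})))"

text \<open>abc is a missing path of length 2 which is a component of the missing graph.\<close>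
definition missing_path :: "'a set \<Rightarrow> ('a \<times> 'a) set \<Rightarrow> 'a \<Rightarrow> 'a \<Rightarrow> 'a \<Rightarrow> bool" where
  "missing_path V E a b c \<longleftrightarrow> missing_edge V E a b \<and> missing_edge V E b c \<and> a \<noteq> c \<and>
     (\<forall>x y. missing_edge V E x y \<and> {x,y} \<inter> {a,b,c} \<noteq> {} \<longrightarrow> {x,y} = {a,b} \<or> {x,y} = {b,c})"

definition out_nbhd :: "'a set \<Rightarrow> ('a \<times> 'a) set \<Rightarrow> 'a \<Rightarrow> 'a set" where
  "out_nbhd S E v = {w \<in> S. (v,w) \<in> E}"

definition in_nbhd :: "'a set \<Rightarrow> ('a \<times> 'a) set \<Rightarrow> 'a \<Rightarrow> 'a set" where
  "in_nbhd S E v = {w \<in> S. (w,v) \<in> E}"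

definition second_out_nbhd :: "'a set \<Rightarrow> ('a \<times> 'a) set \<Rightarrow> 'a \<Rightarrow> 'a set" where
  "second_out_nbhd V E v = {w \<in> V. w \<notin> out_nbhd V E v \<and> w \<noteq> v \<and>
      (\<exists>u \<in> out_nbhd V E v. (u,w) \<in> E)}"

definition loses :: "'a set \<Rightarrow> ('a \<times> 'a) set \<Rightarrow> 'a \<Rightarrow> 'a \<Rightarrow> 'a \<Rightarrow> 'a \<Rightarrow> bool" where
  "loses V E x y a b \<longleftrightarrow> (\<exists>x' y' a' b'. {x',y'} = {x,y} \<and> {a',b'} = {a,b} \<and>
     (x',a') \<in> E \<and> b' \<notin> out_nbhd V E x' \<union> second_out_nbhd V E x' \<and>
     (y',b') \<in> E \<and> a' \<notin> out_nbhd V E y' \<union> second_out_nbhd V E y')"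

definition path_loses :: "'a set \<Rightarrow> ('a \<times> 'a) set \<Rightarrow> 'a \<Rightarrow> 'a \<Rightarrow> 'a \<Rightarrow> 'a \<Rightarrow> 'a \<Rightarrow> 'a \<Rightarrow> bool" where
  "path_loses V E a b c x y z \<longleftrightarrow>
     loses V E a b x y \<and> loses V E a b y z \<and> loses V E b c x y \<and> loses V E b c y z"

definition double_cycle :: "'a set \<Rightarrow> ('a \<times> 'a) set \<Rightarrow> nat \<Rightarrow> (nat \<Rightarrow> 'a) \<Rightarrow> (nat \<Rightarrow> 'a) \<Rightarrow> (nat \<Rightarrow> 'a) \<Rightarrow> bool" where
  "double_cycle V E k a b c \<longleftrightarrow> k \<ge> 2 \<and>
     (\<forall>i<k. missing_path V E (a i) (b i) (c i)) \<and>
     (\<forall>i<k. \<forall>j<k. i \<noteq> j \<longrightarrow> {a i, b i, c i} \<noteq> {a j, b j, c j}) \<and>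
     (\<forall>i<k. path_loses V E (a i) (b i) (c i)
                (a (Suc i mod k)) (b (Suc i mod k)) (c (Suc i mod k)))"

definition cycle_vertices :: "nat \<Rightarrow> (nat \<Rightarrow> 'a) \<Rightarrow> (nat \<Rightarrow> 'a) \<Rightarrow> (nat \<Rightarrow> 'a) \<Rightarrow> 'a set" where
  "cycle_vertices k a b c = (\<Union>i<k. {a i, b i, c i})"

end

theory Submission
  imports Defs
begin

lemma L_no2path:
  assumes og: "oriented_graph V E" and l: "loses V E x y p q"
    and s: "s \<in> {x,y}" and t: "t \<in> {p,q}" and ts: "(t,s) \<in> E" and su: "(s,u) \<in> E"
  shows "(u,t) \<notin> E"
proof
  assume ut: "(u,t) \<in> E"
  from l obtain x' y' p' q' where h: "{x',y'}={x,y}" "{p',q'}={p,q}" "(x',p')\<in>E"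
    "q'\<notin>out_nbhd V E x' \<union> second_out_nbhd V E x'" "(y',q')\<in>E"
    "p'\<notin> out_nbhd V E y' \<union> second_out_nbhd V E y'" unfolding loses_def by blast
  have gen: "t \<notin> second_out_nbhd V E s \<Longrightarrow> False"
    using og ts su ut unfolding second_out_nbhd_def out_nbhd_def oriented_graph_def by blast
  have asym: "\<And>x y. (x,y) \<in> E \<Longrightarrow> (y,x) \<notin> E" using og unfolding oriented_graph_def by blast
  have "s = x' \<or> s = y'" using s h(1) by (auto simp: doubleton_eq_iff)
  moreover have "t = p' \<or> t = q'" using t h(2) by (auto simp: doubleton_eq_iff)
  ultimately show False using gen h asym ts by blast
qed

lemma L_orient:
  assumes og: "oriented_graph V E" and l: "loses V E x y p q"
    and adj: "\<forall>u\<in>{x,y}. \<forall>w\<in>{p,q}. (u,w)\<in>E \<or> (w,u)\<in>E"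
  shows "((x,p)\<in>E \<longleftrightarrow> (y,q)\<in>E) \<and> ((x,p)\<in>E \<longleftrightarrow> (q,x)\<in>E) \<and> ((x,p)\<in>E \<longleftrightarrow> (p,y)\<in>E)"
proof -
  from l obtain x' y' p' q' where h: "{x',y'}={x,y}" "{p',q'}={p,q}" "(x',p')\<in>E"
    "q'\<notin>out_nbhd V E x' \<union> second_out_nbhd V E x'" "(y',q')\<in>E"
    "p'\<notin> out_nbhd V E y' \<union> second_out_nbhd V E y'" unfolding loses_def by blast
  have EV: "\<And>x y. (x,y) \<in> E \<Longrightarrow> x \<in> V \<and> y \<in> V" using og unfolding oriented_graph_def by blast
  have asym: "\<And>x y. (x,y) \<in> E \<Longrightarrow> (y,x) \<notin> E" using og unfolding oriented_graph_def by blast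
  have n1: "(x',q') \<notin> E" using h(4) EV[OF h(5)] unfolding out_nbhd_def by blast
  have n2: "(y',p') \<notin> E" using h(6) EV[OF h(3)] unfolding out_nbhd_def by blast
  have c1: "(x' = x \<and> y' = y) \<or> (x' = y \<and> y' = x)" using h(1) by (auto simp: doubleton_eq_iff)
  have c2: "(p' = p \<and> q' = q) \<or> (p' = q \<and> q' = p)" using h(2) by (auto simp: doubleton_eq_iff)
  show ?thesis using c1 c2 adj n1 n2 h(3) h(5) asym by (elim disjE conjE) (simp; metis)+
qed

locale DCL =
  fixes V :: "'a set" and E :: "('a \<times> 'a) set" and k :: nat and a b c :: "nat \<Rightarrow> 'a" and i :: nat
  assumes og: "oriented_graph V E" and dcy: "double_cycle V E k a b c" and ik: "i < k"
begin

definition P where "P j = {a j, b j, c j}"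

lemma EV: "(x,y) \<in> E \<Longrightarrow> x \<in> V \<and> y \<in> V" using og unfolding oriented_graph_def by blast
lemma asym: "(x,y) \<in> E \<Longrightarrow> (y,x) \<notin> E" using og unfolding oriented_graph_def by blast
lemma irr: "(x,x) \<notin> E" using og unfolding oriented_graph_def by blast

lemma k2: "k \<ge> 2" using dcy unfolding double_cycle_def by blast

lemma mp: "j < k \<Longrightarrow> missing_path V E (a j) (b j) (c j)"
  using dcy unfolding double_cycle_def by blast

lemma sub:
  assumes j: "j < k" and l: "l < k" and ne: "P j \<inter> P l \<noteq> {}"
  shows "P j \<subseteq> P l"
proof -
  have mj: "missing_edge V E (a j) (b j)" "missing_edge V E (b j) (c j)"
    using mp[OF j] unfolding missing_path_def by auto
  have ml: "\<And>x y. missing_edge V E x y \<Longrightarrow> {x,y} \<inter> P l \<noteq> {} \<Longrightarrow> {x,y} = {a l, b l} \<or> {x,y} = {b l, c l}"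
    using mp[OF l] unfolding missing_path_def P_def by blast
  have ins: "\<And>x y. missing_edge V E x y \<Longrightarrow> {x,y} \<inter> P l \<noteq> {} \<Longrightarrow> {x,y} \<subseteq> P l"
    using ml unfolding P_def by blast
  have "b j \<in> P l"
  proof -
    obtain v where v: "v \<in> P j" "v \<in> P l" using ne by blast
    have "v = a j \<or> v = b j \<or> v = c j" using v unfolding P_def by blast
    then show ?thesis
    proof (elim disjE)
      assume "v = a j" then show ?thesis using ins[OF mj(1)] v by blast
    next
      assume "v = b j" then show ?thesis using v by blast
    next
      assume "v = c j" then show ?thesis using ins[OF mj(2)] v by blast
    qed
  qed
  then show ?thesis using ins[OF mj(1)] ins[OF mj(2)] unfolding P_def by blast
qed

lemma disj: "j < k \<Longrightarrow> l < k \<Longrightarrow> j \<noteq> l \<Longrightarrow> P j \<inter> P l = {}"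
proof (rule ccontr)
  assume a: "j < k" "l < k" "j \<noteq> l" "P j \<inter> P l \<noteq> {}"
  then have "P j = P l" using sub[of j l] sub[of l j] by blast
  then show False using dcy a unfolding double_cycle_def P_def by blast
qed

lemma inV: "j < k \<Longrightarrow> u \<in> P j \<Longrightarrow> u \<in> V"
  using mp[of j] unfolding missing_path_def missing_edge_def P_def by blast

lemma adj:
  assumes j: "j < k" and l: "l < k" and jl: "j \<noteq> l" and u: "u \<in> P j" and w: "w \<in> P l"
  shows "(u,w) \<in> E \<or> (w,u) \<in> E"
proof -
  have uw: "u \<noteq> w" using disj[OF j l jl] u w by blast
  have "\<not> missing_edge V E u w"
  proof
    assume me: "missing_edge V E u w"
    have "{u,w} = {a j, b j} \<or> {u,w} = {b j, c j}"
      using mp[OF j] me u unfolding missing_path_def P_def by blast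
    then have "w \<in> P j" unfolding P_def by blast
    then show False using disj[OF j l jl] w by blast
  qed
  then show ?thesis using inV[OF j u] inV[OF l w] uw unfolding missing_edge_def by blast
qed

lemma sucne: assumes "j < k" shows "Suc j mod k \<noteq> j"
proof (cases "Suc j < k")
  case True then show ?thesis by simp
next
  case False
  have "Suc j = k" using False assms by simp
  then show ?thesis using k2 by auto
qed

lemma sucl: "Suc j mod k < k" using k2 by simp

lemma P2:
  assumes j: "j < k" and u: "u \<in> P j" and w: "w \<in> P (Suc j mod k)" and wu: "(w,u) \<in> E" and uz: "(u,z) \<in> E"
  shows "(z,w) \<notin> E"
proof -
  let ?j = "Suc j mod k"
  have pl: "path_loses V E (a j) (b j) (c j) (a ?j) (b ?j) (c ?j)" using dcy j unfolding double_cycle_def by blast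
  obtain x y p q where l: "loses V E x y p q" "u \<in> {x,y}" "w \<in> {p,q}"
  proof -
    have "u \<in> {a j, b j} \<or> u \<in> {b j, c j}" using u unfolding P_def by blast
    moreover have "w \<in> {a ?j, b ?j} \<or> w \<in> {b ?j, c ?j}" using w unfolding P_def by blast
    ultimately show ?thesis using that pl unfolding path_loses_def by blast
  qed
  show ?thesis using L_no2path[OF og l wu uz] .
qed

definition cls where "cls j e = (if e then {b j} else {a j, c j})"
definition sig where "sig j = ((b j, b (Suc j mod k)) \<in> E)"

lemma clsP: "cls j e \<subseteq> P j" unfolding cls_def P_def by auto
lemma clsne: "\<exists>u. u \<in> cls j e" unfolding cls_def by auto
lemma Pcls: "P j = cls j False \<union> cls j True" unfolding cls_def P_def by auto

lemma P1:
  assumes j: "j < k" and u: "u \<in> cls j e" and w: "w \<in> cls (Suc j mod k) (e \<noteq> sig j)"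
  shows "(w,u) \<in> E"
proof -
  let ?j = "Suc j mod k"
  have pl: "path_loses V E (a j) (b j) (c j) (a ?j) (b ?j) (c ?j)" using dcy j unfolding double_cycle_def by blast
  have ad: "\<And>x y. x \<in> P j \<Longrightarrow> y \<in> P ?j \<Longrightarrow> (x,y) \<in> E \<or> (y,x) \<in> E"
    using adj[OF j sucl] sucne[OF j] by metis
  have ad2: "\<And>x y p q. x \<in> P j \<Longrightarrow> y \<in> P j \<Longrightarrow> p \<in> P ?j \<Longrightarrow> q \<in> P ?j \<Longrightarrow>
     \<forall>u\<in>{x,y}. \<forall>w\<in>{p,q}. (u,w)\<in>E \<or> (w,u)\<in>E" using ad by blast
  have inP: "a j \<in> P j" "b j \<in> P j" "c j \<in> P j" "a ?j \<in> P ?j" "b ?j \<in> P ?j" "c ?j \<in> P ?j"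
    unfolding P_def by auto
  have l1: "loses V E (a j) (b j) (a ?j) (b ?j)" "loses V E (a j) (b j) (b ?j) (c ?j)"
      "loses V E (b j) (c j) (a ?j) (b ?j)" "loses V E (b j) (c j) (b ?j) (c ?j)"
    using pl unfolding path_loses_def by auto
  note o1 = L_orient[OF og l1(1) ad2[OF inP(1) inP(2) inP(4) inP(5)]]
  note o2 = L_orient[OF og l1(2) ad2[OF inP(1) inP(2) inP(5) inP(6)]]
  note o3 = L_orient[OF og l1(3) ad2[OF inP(2) inP(3) inP(4) inP(5)]]
  note o4 = L_orient[OF og l1(4) ad2[OF inP(2) inP(3) inP(5) inP(6)]]
  have as: "\<And>x y. (x,y) \<in> E \<Longrightarrow> (y,x) \<notin> E" by (rule asym)
  have adx: "\<And>x y. x \<in> P j \<Longrightarrow> y \<in> P ?j \<Longrightarrow> (x,y) \<notin> E \<Longrightarrow> (y,x) \<in> E" using ad by blast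
  note A = adx[OF inP(1) inP(4)] adx[OF inP(1) inP(5)] adx[OF inP(1) inP(6)]
           adx[OF inP(2) inP(4)] adx[OF inP(2) inP(5)] adx[OF inP(2) inP(6)]
           adx[OF inP(3) inP(4)] adx[OF inP(3) inP(5)] adx[OF inP(3) inP(6)]
  show ?thesis
  proof (cases "sig j")
    case True
    then have bb: "(b j, b ?j) \<in> E" unfolding sig_def .
    have nbb: "(b ?j, b j) \<notin> E" using as[OF bb] .
    have f1: "(b ?j, a j) \<in> E" "(a ?j, b j) \<in> E" using o1 bb by blast+
    have f2: "(c ?j, b j) \<in> E" "(b ?j, c j) \<in> E" using o4 bb by blast+
    show ?thesis
    proof (cases e)
      case True then show ?thesis using u w f1 f2 \<open>sig j\<close> unfolding cls_def by auto
    next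
      case False then show ?thesis using u w f1 f2 \<open>sig j\<close> unfolding cls_def by auto
    qed
  next
    case False
    then have bb: "(b ?j, b j) \<in> E" unfolding sig_def using A(5) by blast
    have nbb: "(b j, b ?j) \<notin> E" using as[OF bb] .
    have g1: "(a ?j, a j) \<in> E" using o1 nbb A(1) by blast
    have g2: "(c ?j, c j) \<in> E" using o4 nbb A(9) by blast
    have g3: "(a ?j, c j) \<in> E" using o3 bb by blast
    have g4: "(c ?j, a j) \<in> E" using o2 bb by blast
    show ?thesis
    proof (cases e)
      case True then show ?thesis using u w bb \<open>\<not> sig j\<close> unfolding cls_def by auto
    next
      case False then show ?thesis using u w g1 g2 g3 g4 \<open>\<not> sig j\<close> unfolding cls_def by auto
    qed
  qed
qed

definition g where "g t = (i + t) mod k"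

lemma kpos: "0 < k" using ik by simp
lemma gl: "g t < k" unfolding g_def using kpos by simp
lemma g0: "g 0 = i" unfolding g_def using ik by simp
lemma gk: "g k = i" unfolding g_def using ik by simp
lemma gsuc: "Suc (g t) mod k = g (Suc t)" unfolding g_def by (simp add: mod_Suc_eq)
lemma gne: assumes "0 < t" "t < k" shows "g t \<noteq> i"
proof (cases "i + t < k")
  case True then show ?thesis unfolding g_def using assms by simp
next
  case False
  then have "(i+t) mod k = (i + t - k) mod k" by (simp add: le_mod_geq)
  also have "\<dots> = i + t - k" using assms ik by simp
  finally show ?thesis unfolding g_def using assms False by simp
qed

lemma ai: "a i \<in> cls i False" "c i \<in> cls i False" "a i \<in> P i" "c i \<in> P i" unfolding cls_def P_def by auto

primrec ef :: "nat \<Rightarrow> bool" where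
  "ef 0 = False" | "ef (Suc t) = (ef t \<noteq> sig (g t))"

primrec eb :: "nat \<Rightarrow> bool" where
  "eb 0 = False" | "eb (Suc m) = (eb m \<noteq> sig (g (k - Suc m)))"

lemma fwd: "0 < t \<Longrightarrow> t < k \<Longrightarrow> w \<in> cls (g t) (ef t) \<Longrightarrow> (w, a i) \<in> E \<and> (w, c i) \<in> E"
proof (induction t arbitrary: w)
  case 0 then show ?case by simp
next
  case (Suc t)
  show ?case
  proof (cases "t = 0")
    case True
    have w: "w \<in> cls (Suc i mod k) (False \<noteq> sig i)" using Suc.prems True gsuc[of 0] g0 by simp
    show ?thesis using P1[OF ik ai(1) w] P1[OF ik ai(2) w] by blast
  next
    case False
    obtain u where u: "u \<in> cls (g t) (ef t)" using clsne by blast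
    have IH: "(u, a i) \<in> E" "(u, c i) \<in> E" using Suc.IH[OF _ _ u] False Suc.prems by auto
    have w: "w \<in> cls (Suc (g t) mod k) (ef t \<noteq> sig (g t))" using Suc.prems gsuc[of t] by simp
    have wu: "(w,u) \<in> E" using P1[OF gl u w] .
    have wP: "w \<in> P (Suc (g t) mod k)" using w clsP by blast
    have uP: "u \<in> P (g t)" using u clsP by blast
    have n1: "(a i, w) \<notin> E" using P2[OF gl uP wP wu IH(1)] .
    have n2: "(c i, w) \<notin> E" using P2[OF gl uP wP wu IH(2)] .
    have ne: "Suc (g t) mod k \<noteq> i" using gsuc[of t] gne[of "Suc t"] Suc.prems by simp
    show ?thesis using adj[OF sucl ik ne wP ai(3)] adj[OF sucl ik ne wP ai(4)] n1 n2 by blast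
  qed
qed

lemma bwd: "0 < m \<Longrightarrow> m < k \<Longrightarrow> z \<in> cls (g (k - m)) (eb m) \<Longrightarrow> (a i, z) \<in> E \<and> (c i, z) \<in> E"
proof (induction m arbitrary: z)
  case 0 then show ?case by simp
next
  case (Suc m)
  have gs: "Suc (g (k - Suc m)) mod k = g (k - m)" using gsuc[of "k - Suc m"] Suc.prems
    by (simp add: Suc_diff_Suc)
  have z: "z \<in> cls (g (k - Suc m)) (eb (Suc m))" using Suc.prems by simp
  show ?case
  proof (cases "m = 0")
    case True
    have e: "(eb (Suc m) \<noteq> sig (g (k - Suc m))) = False" using True by simp
    have "cls (Suc (g (k - Suc m)) mod k) (eb (Suc m) \<noteq> sig (g (k - Suc m))) = cls i False"
      using gs e True gk by simp
    then show ?thesis using P1[OF gl z, of "a i"] P1[OF gl z, of "c i"] ai by simp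
  next
    case False
    obtain w where w: "w \<in> cls (g (k - m)) (eb m)" using clsne by blast
    have IH: "(a i, w) \<in> E" "(c i, w) \<in> E" using Suc.IH[OF _ _ w] False Suc.prems by auto
    have w': "w \<in> cls (Suc (g (k - Suc m)) mod k) (eb (Suc m) \<noteq> sig (g (k - Suc m)))"
      using w gs by (cases "sig (g (k - Suc m))") simp_all
    have wz: "(w,z) \<in> E" using P1[OF gl z w'] .
    have wP: "w \<in> P (Suc (g (k - Suc m)) mod k)" using w' clsP by blast
    have zP: "z \<in> P (g (k - Suc m))" using z clsP by blast
    have n1: "(z, a i) \<notin> E" using P2[OF gl zP wP wz] IH(1) asym by blast
    have n2: "(z, c i) \<notin> E" using P2[OF gl zP wP wz] IH(2) asym by blast
    have ne: "g (k - Suc m) \<noteq> i" using gne[of "k - Suc m"] Suc.prems False by simp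
    show ?thesis using adj[OF gl ik ne zP ai(3)] adj[OF gl ik ne zP ai(4)] n1 n2 by blast
  qed
qed

lemma uniform:
  assumes j: "j < k" and ji: "j \<noteq> i" and v: "v \<in> P j"
  shows "((v, a i) \<in> E \<and> (v, c i) \<in> E) \<or> ((a i, v) \<in> E \<and> (c i, v) \<in> E)"
proof -
  define t where "t = (j + k - i) mod k"
  have gt: "g t = j"
  proof -
    have "g t = (i + (j + k - i)) mod k" unfolding g_def t_def by (simp add: mod_add_right_eq)
    also have "i + (j + k - i) = j + k" using ik by simp
    finally show ?thesis using j by simp
  qed
  have tk: "t < k" unfolding t_def using kpos by simp
  have t0: "0 < t" using gt g0 ji by (cases t) auto
  define m where "m = k - t"
  have m: "0 < m" "m < k" "k - m = t" using tk t0 unfolding m_def by auto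
  show ?thesis
  proof (cases "ef t = eb m")
    case True
    obtain u where u: "u \<in> cls (g t) (ef t)" using clsne by blast
    have "(u, a i) \<in> E" using fwd[OF t0 tk u] by blast
    moreover have "(a i, u) \<in> E" using bwd[OF m(1) m(2)] u True m(3) by auto
    ultimately show ?thesis using asym by blast
  next
    case False
    have "v \<in> cls j (ef t) \<or> v \<in> cls j (eb m)" using v False Pcls[of j] by (cases "ef t") auto
    then show ?thesis using fwd[OF t0 tk] bwd[OF m(1) m(2)] m(3) gt by auto
  qed
qed

lemma main:
  "out_nbhd (cycle_vertices k a b c) E (a i) - {c i} = out_nbhd (cycle_vertices k a b c) E (c i) - {a i}
   \<and> in_nbhd (cycle_vertices k a b c) E (a i) - {c i} = in_nbhd (cycle_vertices k a b c) E (c i) - {a i}"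
proof -
  have me: "missing_edge V E (a i) (b i)" "missing_edge V E (b i) (c i)"
    using mp[OF ik] unfolding missing_path_def by auto
  have nb: "(a i, b i) \<notin> E" "(b i, a i) \<notin> E" "(b i, c i) \<notin> E" "(c i, b i) \<notin> E"
    using me unfolding missing_edge_def by auto
  have key: "\<And>v. v \<in> cycle_vertices k a b c \<Longrightarrow> v \<noteq> a i \<Longrightarrow> v \<noteq> c i \<Longrightarrow>
     ((a i, v) \<in> E \<longleftrightarrow> (c i, v) \<in> E) \<and> ((v, a i) \<in> E \<longleftrightarrow> (v, c i) \<in> E)"
  proof -
    fix v assume v: "v \<in> cycle_vertices k a b c" "v \<noteq> a i" "v \<noteq> c i"
    then obtain j where j: "j < k" "v \<in> P j" unfolding cycle_vertices_def P_def by blast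
    show "((a i, v) \<in> E \<longleftrightarrow> (c i, v) \<in> E) \<and> ((v, a i) \<in> E \<longleftrightarrow> (v, c i) \<in> E)"
    proof (cases "j = i")
      case True
      then have "v = b i" using j v unfolding P_def by blast
      then show ?thesis using nb by simp
    next
      case False
      show ?thesis using uniform[OF j(1) False j(2)] asym by blast
    qed
  qed
  show ?thesis using key irr unfolding out_nbhd_def in_nbhd_def by blast
qed

end

theorem lemma4p8:
  fixes V :: "'a set" and E :: "('a \<times> 'a) set" and k :: nat and a b c :: "nat \<Rightarrow> 'a"
  assumes "tournament_missing_disjoint_P2 V E"
    and "double_cycle V E k a b c"
    and "i < k"
  shows "out_nbhd (cycle_vertices k a b c) E (a i) - {c i}
           = out_nbhd (cycle_vertices k a b c) E (c i) - {a i}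
       \<and> in_nbhd (cycle_vertices k a b c) E (a i) - {c i}
           = in_nbhd (cycle_vertices k a b c) E (c i) - {a i}"
proof -
  interpret DCL V E k a b c i
    using assms unfolding tournament_missing_disjoint_P2_def by unfold_locales auto
  show ?thesis by (rule main)
qed

end
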